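(* Consider the 2-node network game with $\pi^M=W_{soc}$, $a_1=a_2=a>0$, $c_1=c_2=c>0$, $b_1,b_2>0$ with $1<b_1/b_2\le 3$, and $f_{12}=\infty$. Then the GNE is unique and is given by $$r^*=\frac{ac(b_2-b_1)}{(b_1+b_2)(b_1b_2+2c^2)+c(b_1^2+b_2^2+4b_1b_2)},\qquad q_1^*=\frac{a-b_1r^*}{2(b_1+c)},\qquad q_2^*=\frac{a+b_2r^*}{2(b_2+c)}.$$ At this GNE, $a-b_1r^*\ge 0$, $a+b_2r^*\ge0$, and $r^*=\frac{b_2q_2^*-b_1q_1^*}{b_1+b_2}$.
   Context: 2-node network game. There are generators $G_1,G_2$. Generator $k$ chooses $q_k\ge 0$ and has profit $\pi^G_k=q_kp_k(q_k+r_k)-c_kq_k^2$, where $p_k(d)=a_k-b_kd$. The market maker chooses $r\in\mathbb{R}$ and sets $r_1=r$, $r_2=-r$, subject to $-q_1\le r\le q_2$ (there is no line limit). Social welfare objective. The market maker maximizes $$W_{soc}(q,r)=\sum_k\Big(\int_0^{q_k+r_k}p_k(w)dw-c_kq_k^2\Big).$$ GNE. A triple $(q_1^*,q_2^*,r^* )$ with $r^*$ feasible given $q^*$ is a GNE if both of the following hold: - each $q_k^*$ maximizes $\pi^G_k$ over $q_k\ge0$, given the other generator's quantity and $r^*$; - $r^*$ maximizes $W_{soc}(q^*,\cdot)$ over the feasible set determined by $q^*$. *)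

theory Defs
  imports "HOL-Analysis.Analysis"
begin

text \<open>Two-node network game. Generator k has inverse demand p_k(d) = a_k - b_k d,
  cost c_k q^2. The market maker chooses r, with r_1 = r, r_2 = -r,
  feasible iff -q_1 \<le> r \<le> q_2.\<close>

definition price :: "real \<Rightarrow> real \<Rightarrow> real \<Rightarrow> real" where
  "price a b d = a - b * d"

definition gen_profit :: "real \<Rightarrow> real \<Rightarrow> real \<Rightarrow> real \<Rightarrow> real \<Rightarrow> real" where
  "gen_profit a b c q rk = q * price a b (q + rk) - c * q^2"

text \<open>Social welfare  sum_k (int_0^{q_k + r_k} p_k(w) dw - c_k q_k^2).
  On the feasible set q_k + r_k \<ge> 0, so the integral over {0..q_k+r_k} is the usual one.\<close>
definition W_soc :: "real \<Rightarrow> real \<Rightarrow> real \<Rightarrow> real \<Rightarrow> real \<Rightarrow> real \<Rightarrow>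
    real \<Rightarrow> real \<Rightarrow> real \<Rightarrow> real" where
  "W_soc a1 b1 c1 a2 b2 c2 q1 q2 r =
     (integral {0..q1 + r} (\<lambda>w. price a1 b1 w) - c1 * q1^2)
   + (integral {0..q2 + (- r)} (\<lambda>w. price a2 b2 w) - c2 * q2^2)"

definition feasible_r :: "real \<Rightarrow> real \<Rightarrow> real \<Rightarrow> bool" where
  "feasible_r q1 q2 r \<longleftrightarrow> - q1 \<le> r \<and> r \<le> q2"

definition is_GNE :: "real \<Rightarrow> real \<Rightarrow> real \<Rightarrow> real \<Rightarrow> real \<Rightarrow> real \<Rightarrow>
    real \<Rightarrow> real \<Rightarrow> real \<Rightarrow> bool" where
  "is_GNE a1 b1 c1 a2 b2 c2 q1 q2 r \<longleftrightarrow>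
     q1 \<ge> 0 \<and> q2 \<ge> 0 \<and> feasible_r q1 q2 r \<and>
     (\<forall>q \<ge> 0. gen_profit a1 b1 c1 q r \<le> gen_profit a1 b1 c1 q1 r) \<and>
     (\<forall>q \<ge> 0. gen_profit a2 b2 c2 q (- r) \<le> gen_profit a2 b2 c2 q2 (- r)) \<and>
     (\<forall>r'. feasible_r q1 q2 r' \<longrightarrow>
        W_soc a1 b1 c1 a2 b2 c2 q1 q2 r' \<le> W_soc a1 b1 c1 a2 b2 c2 q1 q2 r)"

end

theory Submission
  imports Defs
begin

lemma int_price: assumes "x \<ge> 0" shows "integral {0..x} (\<lambda>w. price a b w) = a*x - b*x^2/2"
proof -
  have "((\<lambda>w. price a b w) has_integral ((\<lambda>w. a*w - b*(w*w)/2) x - (\<lambda>w. a*w - b*(w*w)/2) 0)) {0..x}"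
    apply (rule fundamental_theorem_of_calculus[OF assms])
    apply (auto intro!: derivative_eq_intros simp: price_def)
    done
  then show ?thesis by (simp add: integral_unique power2_eq_square)
qed

lemma gen_id: "gen_profit A B C q rk = q*(A - B*rk) - (B+C)*q^2"
  unfolding gen_profit_def price_def by (simp add: algebra_simps power2_eq_square)

lemma gen_opt:
  assumes "B > 0" "C > 0" "A - B*rk = 2*(B+C)*q0"
  shows "gen_profit A B C q rk \<le> gen_profit A B C q0 rk"
proof -
  have "gen_profit A B C q0 rk - gen_profit A B C q rk = (B+C)*(q-q0)^2"
    unfolding gen_id assms(3) by (simp add: algebra_simps power2_eq_square)
  moreover have "(B+C)*(q-q0)^2 \<ge> 0" using assms by simp
  ultimately show ?thesis by linarith
qed

lemma gen_char:
  assumes "B > 0" "C > 0" "q1 \<ge> 0" "\<forall>q\<ge>0. gen_profit A B C q rk \<le> gen_profit A B C q1 rk"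
  shows "(A - B*rk \<ge> 0 \<and> A - B*rk = 2*(B+C)*q1) \<or> (A - B*rk < 0 \<and> q1 = 0)"
proof (cases "A - B*rk \<ge> 0")
  case True
  define q0 where "q0 = (A - B*rk)/(2*(B+C))"
  have e: "A - B*rk = 2*(B+C)*q0" using assms unfolding q0_def by (simp add: field_simps)
  have "q0 \<ge> 0" using True assms unfolding q0_def by simp
  then have le: "gen_profit A B C q0 rk \<le> gen_profit A B C q1 rk" using assms(4) by blast
  have "gen_profit A B C q0 rk - gen_profit A B C q1 rk = (B+C)*(q1-q0)^2"
    unfolding gen_id e by (simp add: algebra_simps power2_eq_square)
  with le have "(B+C)*(q1-q0)^2 \<le> 0" by linarith
  moreover have "B + C > 0" using assms by simp
  ultimately have "(q1-q0)^2 \<le> 0" by (simp add: mult_le_0_iff)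
  then have "q1 = q0" by simp
  then show ?thesis using True e by simp
next
  case False
  have "gen_profit A B C 0 rk \<le> gen_profit A B C q1 rk" using assms(4) by simp
  then have "0 \<le> q1*(A - B*rk) - (B+C)*q1^2" unfolding gen_id by simp
  moreover have "q1*(A - B*rk) \<le> 0" using False assms(3) by (simp add: mult_nonneg_nonpos)
  moreover have "(B+C)*q1^2 \<ge> 0" using assms by simp
  ultimately have "(B+C)*q1^2 = 0" by linarith
  then have "q1 = 0" using assms by simp
  then show ?thesis using False by simp
qed

lemma W_id:
  assumes "feasible_r q1 q2 r"
  shows "W_soc a b1 c a b2 c q1 q2 r =
    a*(q1+r) - b1*(q1+r)^2/2 - c*q1^2 + (a*(q2-r) - b2*(q2-r)^2/2) - c*q2^2"
  using assms unfolding W_soc_def feasible_r_def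
  by (simp add: int_price)

lemma feas_of:
  assumes "b1 > 0" "b2 > 0" "q1 \<ge> 0" "q2 \<ge> 0" "(b1+b2)*r0 = b2*q2 - b1*q1"
  shows "feasible_r q1 q2 r0"
proof -
  have "(b1+b2)*(q1 + r0) = b2*(q1+q2)" using assms(5) by (simp add: algebra_simps)
  then have "q1 + r0 = b2*(q1+q2)/(b1+b2)" using assms(1,2) by (simp add: field_simps)
  then have f1: "q1 + r0 \<ge> 0" using assms by simp
  have "(b1+b2)*(q2 - r0) = b1*(q1+q2)" using assms(5) by (simp add: algebra_simps)
  then have "q2 - r0 = b1*(q1+q2)/(b1+b2)" using assms(1,2) by (simp add: field_simps)
  then have f2: "q2 - r0 \<ge> 0" using assms by simp
  show ?thesis using f1 f2 unfolding feasible_r_def by linarith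
qed

lemma W_diff:
  assumes "feasible_r q1 q2 r0" "feasible_r q1 q2 r" "(b1+b2)*r0 = b2*q2 - b1*q1"
  shows "W_soc a b1 c a b2 c q1 q2 r0 - W_soc a b1 c a b2 c q1 q2 r = (b1+b2)/2*(r-r0)^2"
proof -
  have "W_soc a b1 c a b2 c q1 q2 r0 - W_soc a b1 c a b2 c q1 q2 r - (b1+b2)/2*(r-r0)^2
      = -(r0-r)*((b1+b2)*r0 - (b2*q2 - b1*q1))"
    unfolding W_id[OF assms(1)] W_id[OF assms(2)] by (simp add: field_simps power2_eq_square)
  then show ?thesis using assms(3) by simp
qed

lemma W_char:
  assumes "b1 > 0" "b2 > 0" "q1 \<ge> 0" "q2 \<ge> 0" "feasible_r q1 q2 r"
    "\<forall>r'. feasible_r q1 q2 r' \<longrightarrow> W_soc a b1 c a b2 c q1 q2 r' \<le> W_soc a b1 c a b2 c q1 q2 r"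
  shows "(b1+b2)*r = b2*q2 - b1*q1"
proof -
  define r0 where "r0 = (b2*q2 - b1*q1)/(b1+b2)"
  have h0: "(b1+b2)*r0 = b2*q2 - b1*q1" using assms unfolding r0_def by (simp add: field_simps)
  have fr0: "feasible_r q1 q2 r0" using feas_of[OF assms(1-4) h0] .
  have le: "W_soc a b1 c a b2 c q1 q2 r0 \<le> W_soc a b1 c a b2 c q1 q2 r" using assms(6) fr0 by blast
  have "W_soc a b1 c a b2 c q1 q2 r0 - W_soc a b1 c a b2 c q1 q2 r = (b1+b2)/2*(r-r0)^2"
    using W_diff[OF fr0 assms(5) h0] .
  with le have "(b1+b2)/2*(r-r0)^2 \<le> 0" by linarith
  moreover have "(b1+b2)/2 > 0" using assms by simp
  ultimately have "(r-r0)^2 \<le> 0" by (simp add: mult_le_0_iff)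
  then have "r = r0" by simp
  then show ?thesis using h0 by simp
qed

theorem mainTheorem4:
  fixes a c b1 b2 :: real
  assumes "a > 0" and "c > 0" and "b1 > 0" and "b2 > 0"
    and "1 < b1 / b2" and "b1 / b2 \<le> 3"
  defines "rs \<equiv> a * c * (b2 - b1) /
      ((b1 + b2) * (b1 * b2 + 2 * c^2) + c * (b1^2 + b2^2 + 4 * b1 * b2))"
  defines "q1s \<equiv> (a - b1 * rs) / (2 * (b1 + c))"
  defines "q2s \<equiv> (a + b2 * rs) / (2 * (b2 + c))"
  shows "is_GNE a b1 c a b2 c q1s q2s rs
    \<and> (\<forall>q1 q2 r. is_GNE a b1 c a b2 c q1 q2 r \<longrightarrow> q1 = q1s \<and> q2 = q2s \<and> r = rs)
    \<and> a - b1 * rs \<ge> 0 \<and> a + b2 * rs \<ge> 0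
    \<and> rs = (b2 * q2s - b1 * q1s) / (b1 + b2)"
proof -
  define D where "D = (b1 + b2) * (b1 * b2 + 2 * c^2) + c * (b1^2 + b2^2 + 4 * b1 * b2)"
  have Dpos: "D > 0" unfolding D_def using assms(2-4) by (simp add: add_pos_pos)
  have b12: "b2 < b1" using assms(4,5) by (simp add: field_simps)
  have rsD: "rs * D = a*c*(b2-b1)" unfolding rs_def D_def[symmetric] using Dpos by simp
  have rsneg: "rs < 0"
  proof -
    have "a*c*(b2-b1) < 0" using assms(1,2) b12 by (simp add: mult_pos_neg)
    then show ?thesis using rsD Dpos by (smt (verit) mult_nonneg_nonneg)
  qed
  have K1: "a - b1*rs > 0" using rsneg assms(1,3) by (smt (verit) mult_pos_neg)
  have K2: "a + b2*rs \<ge> 0"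
  proof -
    have "D - c*b2*(b1-b2) = (b1+b2)*(b1*b2+2*c^2) + c*(b1^2 + 2*b2^2 + 3*b1*b2)"
      unfolding D_def by (simp add: algebra_simps power2_eq_square)
    also have "\<dots> \<ge> 0" using assms(2-4) by (simp add: add_nonneg_nonneg)
    finally have Dge: "D - c*b2*(b1-b2) \<ge> 0" .
    have "(a + b2*rs)*D = a*D + b2*(rs*D)" by (simp add: algebra_simps)
    also have "\<dots> = a*(D - c*b2*(b1-b2))" unfolding rsD by (simp add: algebra_simps)
    finally have "(a + b2*rs)*D \<ge> 0" using Dge assms(1) by simp
    then show ?thesis using Dpos by (simp add: zero_le_mult_iff)
  qed
  have e1: "a - b1*rs = 2*(b1+c)*q1s" unfolding q1s_def using assms(2,3) by simp
  have e2: "a + b2*rs = 2*(b2+c)*q2s" unfolding q2s_def using assms(2,4) by simp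
  have key: "(b1+b2)*rs = b2*q2s - b1*q1s"
  proof -
    have "2*(b1+c)*(b2+c)*((b1+b2)*rs - (b2*q2s - b1*q1s))
        = 2*(b1+c)*(b2+c)*(b1+b2)*rs - b2*(b1+c)*(2*(b2+c)*q2s) + b1*(b2+c)*(2*(b1+c)*q1s)"
      by (simp add: algebra_simps)
    also have "\<dots> = 2*(b1+c)*(b2+c)*(b1+b2)*rs - b2*(b1+c)*(a + b2*rs) + b1*(b2+c)*(a - b1*rs)"
      using e1 e2 by simp
    also have "\<dots> = rs*D - a*c*(b2-b1)" unfolding D_def by (simp add: algebra_simps power2_eq_square)
    also have "\<dots> = 0" using rsD by simp
    finally have "2*(b1+c)*(b2+c)*((b1+b2)*rs - (b2*q2s - b1*q1s)) = 0" .
    then show ?thesis using assms(2-4) by simp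
  qed
  have q1nn: "q1s \<ge> 0" unfolding q1s_def using K1 assms(2,3) by simp
  have q2nn: "q2s \<ge> 0" unfolding q2s_def using K2 assms(2,4) by simp
  have feas: "feasible_r q1s q2s rs" using feas_of[OF assms(3,4) q1nn q2nn key] .
  have GNE: "is_GNE a b1 c a b2 c q1s q2s rs"
    unfolding is_GNE_def
  proof (intro conjI allI impI)
    show "q1s \<ge> 0" "q2s \<ge> 0" "feasible_r q1s q2s rs" using q1nn q2nn feas by auto
    fix q :: real
    show "gen_profit a b1 c q rs \<le> gen_profit a b1 c q1s rs"
      using gen_opt[OF assms(3,2) e1] .
    have e2': "a - b2 * - rs = 2*(b2+c)*q2s" using e2 by simp
    show "gen_profit a b2 c q (- rs) \<le> gen_profit a b2 c q2s (- rs)"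
      using gen_opt[OF assms(4,2) e2'] .
  next
    fix r' assume fr: "feasible_r q1s q2s r'"
    have "W_soc a b1 c a b2 c q1s q2s rs - W_soc a b1 c a b2 c q1s q2s r' = (b1+b2)/2*(r'-rs)^2"
      using W_diff[OF feas fr key] .
    moreover have "(b1+b2)/2*(r'-rs)^2 \<ge> 0" using assms(3,4) by simp
    ultimately show "W_soc a b1 c a b2 c q1s q2s r' \<le> W_soc a b1 c a b2 c q1s q2s rs" by linarith
  qed
  have uniq: "\<forall>q1 q2 r. is_GNE a b1 c a b2 c q1 q2 r \<longrightarrow> q1 = q1s \<and> q2 = q2s \<and> r = rs"
  proof (intro allI impI)
    fix q1 q2 r assume G: "is_GNE a b1 c a b2 c q1 q2 r"
    have q1: "q1 \<ge> 0" and q2: "q2 \<ge> 0" and fr: "feasible_r q1 q2 r" using G unfolding is_GNE_def by auto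
    have c1: "(a - b1*r \<ge> 0 \<and> a - b1*r = 2*(b1+c)*q1) \<or> (a - b1*r < 0 \<and> q1 = 0)"
      using gen_char[OF assms(3,2) q1] G unfolding is_GNE_def by blast
    have c2': "(a - b2*(-r) \<ge> 0 \<and> a - b2*(-r) = 2*(b2+c)*q2) \<or> (a - b2*(-r) < 0 \<and> q2 = 0)"
      using gen_char[OF assms(4,2) q2] G unfolding is_GNE_def by blast
    then have c2: "(a + b2*r \<ge> 0 \<and> a + b2*r = 2*(b2+c)*q2) \<or> (a + b2*r < 0 \<and> q2 = 0)" by simp
    have wr: "(b1+b2)*r = b2*q2 - b1*q1"
      using W_char[OF assms(3,4) q1 q2 fr] G unfolding is_GNE_def by blast
    show "q1 = q1s \<and> q2 = q2s \<and> r = rs"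
    proof (cases "a - b1*r \<ge> 0")
      case T1: True
      then have i1: "a - b1*r = 2*(b1+c)*q1" using c1 by auto
      show ?thesis
      proof (cases "a + b2*r \<ge> 0")
        case T2: True
        then have i2: "a + b2*r = 2*(b2+c)*q2" using c2 by auto
        have "2*(b1+c)*(b2+c)*((b1+b2)*r - (b2*q2 - b1*q1))
            = 2*(b1+c)*(b2+c)*(b1+b2)*r - b2*(b1+c)*(2*(b2+c)*q2) + b1*(b2+c)*(2*(b1+c)*q1)"
          by (simp add: algebra_simps)
        also have "\<dots> = 2*(b1+c)*(b2+c)*(b1+b2)*r - b2*(b1+c)*(a + b2*r) + b1*(b2+c)*(a - b1*r)"
          using i1 i2 by simp
        also have "\<dots> = r*D - a*c*(b2-b1)" unfolding D_def by (simp add: algebra_simps power2_eq_square)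
        finally have "r*D - a*c*(b2-b1) = 0" using wr by simp
        then have "r*D = rs*D" using rsD by simp
        then have rr: "r = rs" using Dpos by simp
        have "2*(b1+c)*q1 = 2*(b1+c)*q1s" using i1 e1 rr by metis
        then have "q1 = q1s" using assms(2,3) by auto
        moreover have "2*(b2+c)*q2 = 2*(b2+c)*q2s" using i2 e2 rr by metis
        then have "q2 = q2s" using assms(2,4) by auto
        ultimately show ?thesis using rr by simp
      next
        case F2: False
        then have z2: "q2 = 0" and lt: "a + b2*r < 0" using c2 by auto
        define t where "t = -r"
        have tpos: "t > 0" using lt assms(1,4) unfolding t_def by (smt (verit) mult_nonneg_nonneg)
        have h1: "(b1+b2)*t = b1*q1" using wr z2 unfolding t_def by simp
        have h2: "2*(b1+c)*q1 = a + b1*t" using i1 unfolding t_def by simp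
        have h3: "a < b2*t" using lt unfolding t_def by simp
        have "2*(b1+c)*((b1+b2)*t) = 2*(b1+c)*(b1*q1)" using h1 by simp
        also have "\<dots> = b1*(2*(b1+c)*q1)" by (simp add: algebra_simps)
        also have "\<dots> = b1*(a + b1*t)" using h2 by simp
        also have "\<dots> < b1*(b2*t + b1*t)" using h3 assms(3) by simp
        finally have "(2*(b1+c)*(b1+b2))*t < (b1*(b1+b2))*t" by (simp add: algebra_simps)
        then have "2*(b1+c)*(b1+b2) < b1*(b1+b2)" by (rule mult_right_less_imp_less) (rule less_imp_le[OF tpos])
        then have "2*(b1+c) < b1" by (rule mult_right_less_imp_less) (use assms(3,4) in simp)
        then have False using assms(2,3) by (simp add: algebra_simps)
        then show ?thesis by (rule FalseE)
      qed
    next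
      case F1: False
      then have z1: "q1 = 0" and lt: "a - b1*r < 0" using c1 by auto
      have "b1*r > 0" using lt assms(1) by linarith
      then have rpos: "r > 0" using assms(3) by (simp add: zero_less_mult_iff)
      then have T2: "a + b2*r \<ge> 0" using assms(1,4) by simp
      then have i2: "a + b2*r = 2*(b2+c)*q2" using c2 by auto
      have h1: "(b1+b2)*r = b2*q2" using wr z1 by simp
      have h3: "a < b1*r" using lt by simp
      have "2*(b2+c)*((b1+b2)*r) = 2*(b2+c)*(b2*q2)" using h1 by simp
      also have "\<dots> = b2*(2*(b2+c)*q2)" by (simp add: algebra_simps)
      also have "\<dots> = b2*(a + b2*r)" using i2 by simp
      also have "\<dots> < b2*(b1*r + b2*r)" using h3 assms(4) by simp
      finally have "(2*(b2+c)*(b1+b2))*r < (b2*(b1+b2))*r" by (simp add: algebra_simps)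
      then have "2*(b2+c)*(b1+b2) < b2*(b1+b2)" by (rule mult_right_less_imp_less) (rule less_imp_le[OF rpos])
      then have "2*(b2+c) < b2" by (rule mult_right_less_imp_less) (use assms(3,4) in simp)
      then have False using assms(2,4) by (simp add: algebra_simps)
      then show ?thesis by (rule FalseE)
    qed
  qed
  have b12p: "b1 + b2 \<noteq> 0" using assms(3,4) by simp
  have last: "rs = (b2 * q2s - b1 * q1s) / (b1 + b2)"
    using key b12p by (metis nonzero_mult_div_cancel_left)
  have K1': "a - b1 * rs \<ge> 0" using K1 by (rule less_imp_le)
  show ?thesis
    apply (intro conjI)
        apply (fact GNE)
       apply (fact uniq)
      apply (fact K1')
     apply (fact K2)
    apply (fact last)
    done
qed

end
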